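(* Let $\alpha(n)$ be a log-polynomial sequence of degree $m\ge2$ with data $\{A(n),\kappa,\delta(n)\}$. Suppose the real sequences $A^*(n)$ and $\delta^*(n)>0$ satisfy $$A^*(n)=A(n)+o(\delta(n)),\qquad \delta^*(n)=\delta(n)(1+o(1))\qquad(n\to\infty).$$ Then $\alpha$ is Hermite-Jensen of degree $d$ with data $\{A^*(n),\kappa,\delta^*(n)\}$ for every $d$ with $1\le d\le m+1$.
   Context: Jensen polynomials: $J_\alpha^{d,n}(X)=\sum_{j=0}^d\binom{d}{j}\alpha(n+j)X^j$ and $K_\alpha^{d,n}(X)=X^dJ_\alpha^{d,n}(1/X)$. Limits of polynomials are coefficientwise. $H_d$ is the physicists' Hermite polynomial, $e^{2Xt-t^2}=\sum_d H_d(X)t^d/d!$. Log-polynomial: let $m\ge2$ be an integer and $\kappa\in\{1,-1\}$. A sequence of positive reals $\alpha(n)$ is log-polynomial of degree $m$ with data $\{A(n),\kappa,\delta(n)\}$ if there are real sequences $A(n),\delta(n),g_k(n)$ ($3\le k\le m$) such that $$\log\left(\frac{\alpha(n+j)}{\alpha(n)}\right)=A(n)j+\kappa\delta(n)^2j^2+\sum_{k=3}^m g_k(n)j^k+o(\delta(n)^{m+1})\quad(n\to\infty)$$ for $j=1,\dots,m+1$. In addition, $\delta(n)>0$, $\delta(n)\to0$ and $g_k(n)=o(\delta(n)^k)$. Hermite-Jensen: a sequence of positive reals $\alpha(n)$ is Hermite-Jensen of degree $d\ge1$ with data $\{A(n),\kappa,\delta(n)\}$ if, as $n\to\infty$, both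 $$\frac{\delta(n)^{-d}}{\alpha(n)}J_\alpha^{d,n}\!\left(\frac{\delta(n)X-1}{e^{A(n)}}\right)\quad\text{and}\quad\frac{(e^{A(n)}\delta(n))^{-d}}{\alpha(n)}K_\alpha^{d,n}\!\left(e^{A(n)}(\delta(n)X-1)\right)$$ converge coefficientwise to $H_d(X/2)$ if $\kappa=-1$, and to $i^{-d}H_d(iX/2)$ if $\kappa=1$. *)

theory Defs
  imports Complex_Main "HOL-Computational_Algebra.Polynomial" "HOL-Library.Landau_Symbols"
begin

definition jensen_J :: "(nat \<Rightarrow> real) \<Rightarrow> nat \<Rightarrow> nat \<Rightarrow> real poly" where
  "jensen_J \<alpha> d n = (\<Sum>j\<le>d. monom (real (d choose j) * \<alpha> (n + j)) j)"

(* K_alpha^{d,n}(X) = X^d J_alpha^{d,n}(1/X) = sum_{j=0}^d binom(d,j) alpha(n+j) X^(d-j) *)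
definition jensen_K :: "(nat \<Rightarrow> real) \<Rightarrow> nat \<Rightarrow> nat \<Rightarrow> real poly" where
  "jensen_K \<alpha> d n = (\<Sum>j\<le>d. monom (real (d choose j) * \<alpha> (n + j)) (d - j))"

(* Physicists' Hermite polynomial, the coefficient extraction of
   exp(2Xt - t^2) = sum_d H_d(X) t^d / d!:
   H_d(X) = d! * sum_{k <= d/2} (-1)^k (2X)^(d-2k) / (k! (d-2k)!) *)
definition hermite :: "nat \<Rightarrow> complex poly" where
  "hermite d = (\<Sum>k\<le>d div 2.
      monom (of_real (fact d * (-1) ^ k * 2 ^ (d - 2 * k) / (fact k * fact (d - 2 * k)))) (d - 2 * k))"

definition poly_conv :: "(nat \<Rightarrow> complex poly) \<Rightarrow> complex poly \<Rightarrow> bool" where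
  "poly_conv P Q \<longleftrightarrow> (\<forall>i. (\<lambda>n. coeff (P n) i) \<longlonglongrightarrow> coeff Q i)"

definition log_polynomial ::
  "(nat \<Rightarrow> real) \<Rightarrow> nat \<Rightarrow> (nat \<Rightarrow> real) \<Rightarrow> real \<Rightarrow> (nat \<Rightarrow> real) \<Rightarrow> bool" where
  "log_polynomial \<alpha> m A \<kappa> \<delta> \<longleftrightarrow>
     m \<ge> 2 \<and> \<kappa> \<in> {1, -1} \<and> (\<forall>n. \<alpha> n > 0) \<and>
     (\<exists>g :: nat \<Rightarrow> nat \<Rightarrow> real.
        (\<forall>j\<in>{1..m+1}.
           (\<lambda>n. ln (\<alpha> (n + j) / \<alpha> n) - (A n * real j + \<kappa> * \<delta> n ^ 2 * real j ^ 2
                 + (\<Sum>k=3..m. g k n * real j ^ k)))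
           \<in> o[sequentially](\<lambda>n. \<delta> n ^ (m + 1))) \<and>
        (\<forall>n. \<delta> n > 0) \<and> \<delta> \<longlonglongrightarrow> 0 \<and>
        (\<forall>k\<in>{3..m}. g k \<in> o[sequentially](\<lambda>n. \<delta> n ^ k)))"

definition hermite_target :: "real \<Rightarrow> nat \<Rightarrow> complex poly" where
  "hermite_target \<kappa> d =
     (if \<kappa> = -1 then pcompose (hermite d) [:0, 1/2:]
      else smult (inverse (\<i> ^ d)) (pcompose (hermite d) [:0, \<i>/2:]))"

definition hermite_jensen ::
  "(nat \<Rightarrow> real) \<Rightarrow> nat \<Rightarrow> (nat \<Rightarrow> real) \<Rightarrow> real \<Rightarrow> (nat \<Rightarrow> real) \<Rightarrow> bool" where
  "hermite_jensen \<alpha> d A \<kappa> \<delta> \<longleftrightarrow>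
     d \<ge> 1 \<and> \<kappa> \<in> {1, -1} \<and> (\<forall>n. \<alpha> n > 0) \<and>
     poly_conv (\<lambda>n. map_poly complex_of_real
        (smult (inverse (\<delta> n ^ d) / \<alpha> n)
          (pcompose (jensen_J \<alpha> d n) [: -1 / exp (A n), \<delta> n / exp (A n) :])))
       (hermite_target \<kappa> d) \<and>
     poly_conv (\<lambda>n. map_poly complex_of_real
        (smult (inverse ((exp (A n) * \<delta> n) ^ d) / \<alpha> n)
          (pcompose (jensen_K \<alpha> d n) [: - exp (A n), exp (A n) * \<delta> n :])))
       (hermite_target \<kappa> d)"

end

theory Submission
  imports Defs
begin


lemma fd_shift:
  fixes f :: "nat \<Rightarrow> real"
  shows "(\<Sum>l\<le>Suc k. real (Suc k choose l) * (-1)^l * f l)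
       = (\<Sum>l\<le>k. real (k choose l) * (-1)^l * (f l - f (Suc l)))"
proof -
  have "(\<Sum>l\<le>Suc k. real (Suc k choose l) * (-1)^l * f l)
      = f 0 + (\<Sum>l\<le>k. real (Suc k choose Suc l) * (-1)^(Suc l) * f (Suc l))"
    by (subst sum.atMost_Suc_shift) simp
  also have "\<dots> = f 0 + (\<Sum>l\<le>k. real (k choose Suc l) * (-1)^(Suc l) * f (Suc l))
      - (\<Sum>l\<le>k. real (k choose l) * (-1)^l * f (Suc l))"
    by (simp add: sum.distrib[symmetric] sum_subtractf[symmetric] algebra_simps)
  also have "f 0 + (\<Sum>l\<le>k. real (k choose Suc l) * (-1)^(Suc l) * f (Suc l))
      = (\<Sum>l\<le>Suc k. real (k choose l) * (-1)^l * f l)"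
    by (subst sum.atMost_Suc_shift) simp
  also have "\<dots> = (\<Sum>l\<le>k. real (k choose l) * (-1)^l * f l)"
    by simp
  finally show ?thesis by (simp add: sum_subtractf algebra_simps)
qed

lemma fd:
  fixes c :: real
  shows "u \<le> k \<Longrightarrow> (\<Sum>l\<le>k. real (k choose l) * (-1)^l * (c + real l)^u)
      = (if u = k then (-1)^k * fact k else 0)"
proof (induction k arbitrary: u)
  case 0
  then show ?case by simp
next
  case (Suc k)
  have e: "(c + real l)^u - (c + real (Suc l))^u = - (\<Sum>v<u. real (u choose v) * (c + real l)^v)" for l
  proof -
    have "(c + real (Suc l))^u = ((c + real l) + 1)^u" by (simp add: add_ac)
    also have "\<dots> = (\<Sum>v\<le>u. real (u choose v) * (c + real l)^v)"
      by (subst binomial_ring) (simp add: mult_ac)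
    also have "\<dots> = (\<Sum>v<u. real (u choose v) * (c + real l)^v) + (c + real l)^u"
      by (simp add: lessThan_Suc_atMost[symmetric])
    finally show ?thesis by simp
  qed
  have "(\<Sum>l\<le>Suc k. real (Suc k choose l) * (-1)^l * (c + real l)^u)
      = (\<Sum>l\<le>k. real (k choose l) * (-1)^l * (- (\<Sum>v<u. real (u choose v) * (c + real l)^v)))"
    unfolding fd_shift e by (rule refl)
  also have "\<dots> = - (\<Sum>v<u. real (u choose v) * (\<Sum>l\<le>k. real (k choose l) * (-1)^l * (c + real l)^v))"
    by (simp add: sum_distrib_left sum_negf[symmetric] algebra_simps sum.swap[of _ "{..k}"])
  also have "\<dots> = - (\<Sum>v<u. real (u choose v) * (if v = k then (-1)^k * fact k else 0))"
    using Suc.prems by (intro arg_cong[where f=uminus] sum.cong refl) (simp add: Suc.IH)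
  also have "\<dots> = (if u = Suc k then (-1)^(Suc k) * fact (Suc k) else 0)"
  proof (cases "u = Suc k")
    case True
    have "(\<Sum>v<u. real (u choose v) * (if v = k then (-1)^k * fact k else 0))
        = real (u choose k) * ((-1)^k * fact k)"
    proof -
      have "(\<Sum>v<u. real (u choose v) * (if v = k then (-1)^k * fact k else 0))
          = (\<Sum>v<u. if v = k then real (u choose k) * ((-1)^k * fact k) else 0)"
        by (intro sum.cong) auto
      also have "\<dots> = real (u choose k) * ((-1)^k * fact k)" using True by simp
      finally show ?thesis .
    qed
    then show ?thesis using True by (simp add: fact_Suc)
  next
    case False
    then have "u < Suc k" using Suc.prems by simp
    then show ?thesis using False by (auto intro!: sum.neutral)
  qed
  finally show ?case .
qed

lemma MJ:
  assumes "i \<le> d" "u \<le> d - i"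
  shows "(\<Sum>j\<le>d. real (d choose j) * real (j choose i) * (-1)^(j-i) * real j ^ u)
       = (if u = d - i then (-1)^(d-i) * fact d / fact i else 0)"
proof -
  let ?f = "\<lambda>j. real (d choose j) * real (j choose i) * (-1::real)^(j-i) * real j ^ u"
  have "sum ?f {..d} = sum ?f {i..d}"
    by (rule sum.mono_neutral_right) auto
  also have "\<dots> = sum ?f {0+i..(d-i)+i}" using assms by simp
  also have "\<dots> = (\<Sum>l=0..d-i. ?f (l+i))" by (rule sum.shift_bounds_cl_nat_ivl)
  also have "\<dots> = (\<Sum>l\<le>d-i. real (d choose i) * (real ((d-i) choose l) * (-1)^l * (real i + real l)^u))"
  proof (rule sum.cong)
    fix l assume l: "l \<in> {..d-i}"
    have "(d choose (l+i)) * ((l+i) choose i) = (d choose i) * ((d-i) choose (l+i-i))"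
      using l assms by (intro choose_mult) auto
    then have "real (d choose (l+i)) * real ((l+i) choose i) = real (d choose i) * real ((d-i) choose l)"
      by (metis add_diff_cancel_right' of_nat_mult)
    then show "?f (l+i) = real (d choose i) * (real ((d-i) choose l) * (-1)^l * (real i + real l)^u)"
      by (simp add: algebra_simps)
  qed (auto simp: atLeast0AtMost)
  also have "\<dots> = real (d choose i) * (if u = d - i then (-1)^(d-i) * fact (d-i) else 0)"
    by (simp add: sum_distrib_left[symmetric] fd assms)
  also have "\<dots> = (if u = d - i then (-1)^(d-i) * fact d / fact i else 0)"
    using assms by (simp add: binomial_fact field_simps)
  finally show ?thesis .
qed

lemma MK:
  assumes "i \<le> d" "u \<le> d - i"
  shows "(\<Sum>j\<le>d. real (d choose j) * real ((d-j) choose i) * (-1)^(d-j-i) * real j ^ u)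
       = (if u = d - i then fact d / fact i else 0)"
proof -
  let ?f = "\<lambda>j. real (d choose j) * real ((d-j) choose i) * (-1::real)^(d-j-i) * real j ^ u"
  have "sum ?f {..d} = sum ?f {0..d}" by (simp add: atLeast0AtMost)
  also have "\<dots> = (\<Sum>j=0..d. ?f (d + 0 - j))" by (rule sum.atLeastAtMost_rev)
  also have "\<dots> = (\<Sum>j\<le>d. real (d choose j) * real (j choose i) * (-1)^(j-i) * (real d - real j) ^ u)"
  proof (intro sum.cong)
    fix j assume "j \<in> {..d}"
    then have j: "j \<le> d" by simp
    have "d choose (d - j) = d choose j" using binomial_symmetric[OF j] by simp
    then show "?f (d + 0 - j) = real (d choose j) * real (j choose i) * (-1)^(j-i) * (real d - real j) ^ u"
      using j by (simp add: of_nat_diff)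
  qed (simp add: atLeast0AtMost)
  also have "\<dots> = (\<Sum>j\<le>d. real (d choose j) * real (j choose i) * (-1)^(j-i) *
         (\<Sum>v\<le>u. real (u choose v) * (-1)^v * real d ^ (u - v) * real j ^ v))"
  proof (intro sum.cong refl arg_cong2[where f="(*)"])
    fix j
    have "(real d - real j) ^ u = ((- real j) + real d) ^ u" by (rule arg_cong[where f="\<lambda>x. x^u"]) simp
    also have "\<dots> = (\<Sum>v\<le>u. real (u choose v) * (-1)^v * real d ^ (u - v) * real j ^ v)"
      by (subst binomial_ring, intro sum.cong refl, simp only: power_minus[of "real j"] mult_ac)
    finally show "(real d - real j) ^ u = \<dots>" .
  qed
  also have "\<dots> = (\<Sum>v\<le>u. real (u choose v) * (-1)^v * real d ^ (u - v) *
         (\<Sum>j\<le>d. real (d choose j) * real (j choose i) * (-1)^(j-i) * real j ^ v))"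
  proof -
    let ?X = "\<lambda>j v. real (d choose j) * real (j choose i) * (-1::real)^(j-i) *
         (real (u choose v) * (-1)^v * real d ^ (u - v) * real j ^ v)"
    have "(\<Sum>j\<le>d. real (d choose j) * real (j choose i) * (-1)^(j-i) *
         (\<Sum>v\<le>u. real (u choose v) * (-1)^v * real d ^ (u - v) * real j ^ v)) = (\<Sum>j\<le>d. \<Sum>v\<le>u. ?X j v)"
      by (simp only: sum_distrib_left)
    also have "\<dots> = (\<Sum>v\<le>u. \<Sum>j\<le>d. ?X j v)" by (rule sum.swap)
    also have "\<dots> = (\<Sum>v\<le>u. real (u choose v) * (-1)^v * real d ^ (u - v) *
         (\<Sum>j\<le>d. real (d choose j) * real (j choose i) * (-1)^(j-i) * real j ^ v))"
      by (intro sum.cong refl) (simp add: sum_distrib_left mult_ac)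
    finally show ?thesis .
  qed
  also have "\<dots> = (\<Sum>v\<le>u. real (u choose v) * (-1)^v * real d ^ (u - v) *
         (if v = d - i then (-1)^(d-i) * fact d / fact i else 0))"
    using assms by (intro sum.cong refl) (simp add: MJ)
  also have "\<dots> = (if u = d - i then fact d / fact i else 0)"
  proof (cases "u = d - i")
    case True
    have "(\<Sum>v\<le>u. real (u choose v) * (-1)^v * real d ^ (u - v) *
         (if v = d - i then (-1)^(d-i) * fact d / fact i else 0))
       = (\<Sum>v\<le>u. if v = u then (-1)^u * ((-1)^u * fact d / fact i) else 0)"
      using True by (intro sum.cong) auto
    also have "\<dots> = fact d / fact i"
      by (simp add: power_mult_distrib[symmetric] mult.assoc[symmetric])
    finally show ?thesis by (simp only: if_P[OF True])
  next
    case False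
    then show ?thesis using assms by (subst if_not_P[OF False], intro sum.neutral) auto
  qed
  finally show ?thesis .
qed



lemma exp_sub1_bound:
  fixes y :: real assumes "\<bar>y\<bar> \<le> 1"
  shows "\<bar>exp y - 1\<bar> \<le> 3 * \<bar>y\<bar>"
proof -
  obtain t where t: "\<bar>t\<bar> \<le> \<bar>y\<bar>" "exp y = (\<Sum>m<1. y^m / fact m) + exp t / fact 1 * y^1"
    using Maclaurin_exp_le[of y 1] by blast
  have "exp t \<le> exp 1" using t assms by simp
  also have "\<dots> \<le> 3" using exp_le by simp
  finally have "exp t \<le> 3" .
  then have "\<bar>exp t * y\<bar> \<le> 3 * \<bar>y\<bar>"
    by (simp add: abs_mult mult_right_mono)
  then show ?thesis using t by simp
qed

lemma exp_taylor_bound: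
  fixes y :: real assumes "\<bar>y\<bar> \<le> 1"
  shows "\<bar>exp y - (\<Sum>m\<le>N. y^m / fact m)\<bar> \<le> 3 * \<bar>y\<bar> ^ Suc N"
proof -
  obtain t where t: "\<bar>t\<bar> \<le> \<bar>y\<bar>" "exp y = (\<Sum>m<Suc N. y^m / fact m) + exp t / fact (Suc N) * y ^ Suc N"
    using Maclaurin_exp_le[of y "Suc N"] by blast
  have "exp t \<le> exp 1" using t assms by simp
  also have "\<dots> \<le> 3" using exp_le by simp
  finally have e3: "exp t \<le> 3" .
  have f1: "1 \<le> (fact (Suc N) :: real)" by (rule fact_ge_1)
  have "\<bar>exp t / fact (Suc N) * y ^ Suc N\<bar> = exp t / fact (Suc N) * \<bar>y\<bar> ^ Suc N"
    by (simp add: abs_mult power_abs)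
  also have "\<dots> \<le> exp t * \<bar>y\<bar> ^ Suc N"
    using f1 by (intro mult_right_mono) (auto simp: divide_le_eq)
  also have "\<dots> \<le> 3 * \<bar>y\<bar> ^ Suc N"
    using e3 by (intro mult_right_mono) auto
  finally show ?thesis using t by (simp add: lessThan_Suc_atMost)
qed

lemma coeff_power_tendsto:
  fixes P :: "nat \<Rightarrow> real poly"
  assumes "\<And>t. (\<lambda>n. coeff (P n) t) \<longlonglongrightarrow> coeff P0 t"
  shows "(\<lambda>n. coeff (P n ^ s) t) \<longlonglongrightarrow> coeff (P0 ^ s) t"
proof (induction s arbitrary: t)
  case 0
  then show ?case by simp
next
  case (Suc s)
  show ?case unfolding power_Suc coeff_mult
    by (intro tendsto_sum tendsto_mult assms Suc.IH)
qed

lemma main_limit: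
  fixes \<delta> \<delta>' :: "nat \<Rightarrow> real" and Q :: "nat \<Rightarrow> real poly" and Q0 :: "real poly"
    and \<epsilon> \<rho> :: "nat \<Rightarrow> nat \<Rightarrow> real" and W :: "nat \<Rightarrow> real"
  assumes dpos: "\<forall>n. \<delta> n > 0" and d'pos: "\<forall>n. \<delta>' n > 0" and dlim: "\<delta> \<longlonglongrightarrow> 0"
    and ratio: "(\<lambda>n. \<delta> n / \<delta>' n) \<longlonglongrightarrow> 1"
    and Qconv: "\<And>t. (\<lambda>n. coeff (Q n) t) \<longlonglongrightarrow> coeff Q0 t"
    and Qdeg: "\<And>n. degree (Q n) \<le> D0"
    and xO: "\<And>j. j \<le> d \<Longrightarrow> (\<lambda>n. poly (Q n) (\<delta> n * real j)) \<in> O(\<delta>)"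
    and epsO: "\<And>j. j \<le> d \<Longrightarrow> (\<lambda>n. \<epsilon> n j) \<in> o(\<lambda>n. \<delta> n ^ d)"
    and rho: "\<And>n j. j \<le> d \<Longrightarrow> \<rho> n j = exp (poly (Q n) (\<delta> n * real j) + \<epsilon> n j)"
    and id: "i \<le> d"
    and Wm: "\<And>u. u \<le> d - i \<Longrightarrow> (\<Sum>j\<le>d. W j * real j ^ u) = (if u = d - i then L else 0)"
  shows "(\<lambda>n. \<delta>' n ^ i / \<delta>' n ^ d * (\<Sum>j\<le>d. W j * \<rho> n j))
           \<longlonglongrightarrow> L * coeff (\<Sum>s\<le>d. smult (1 / fact s) (Q0 ^ s)) (d - i)"
proof -
  define T where "T n = (\<Sum>s\<le>d. smult (1 / fact s) (Q n ^ s))" for n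
  define T0 where "T0 = (\<Sum>s\<le>d. smult (1 / fact s) (Q0 ^ s))"
  define k where "k = d - i"
  define D where "D = max (D0 * d) d"
  define M where "M t = (\<Sum>j\<le>d. W j * real j ^ t)" for t
  have Tconv: "(\<lambda>n. coeff (T n) t) \<longlonglongrightarrow> coeff T0 t" for t
    unfolding T_def T0_def coeff_sum coeff_smult
    by (intro tendsto_sum tendsto_mult tendsto_const coeff_power_tendsto Qconv)
  have Tdeg: "degree (T n) \<le> D" for n
    unfolding T_def
  proof (rule degree_sum_le)
    fix s assume "s \<in> {..d}"
    then have "s \<le> d" by simp
    have "degree (smult (1 / fact s) (Q n ^ s)) \<le> degree (Q n ^ s)" by (rule degree_smult_le)
    also have "\<dots> \<le> degree (Q n) * s" by (rule degree_power_le)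
    also have "\<dots> \<le> D0 * d" using Qdeg[of n] \<open>s \<le> d\<close> by (intro mult_mono) auto
    also have "\<dots> \<le> D" by (simp add: D_def)
    finally show "degree (smult (1 / fact s) (Q n ^ s)) \<le> D" .
  qed simp
  have polyT: "poly (T n) x = (\<Sum>t\<le>D. coeff (T n) t * x ^ t)" for n x
  proof -
    have "poly (T n) x = (\<Sum>t\<le>degree (T n). coeff (T n) t * x ^ t)" by (rule poly_altdef)
    also have "\<dots> = (\<Sum>t\<le>D. coeff (T n) t * x ^ t)"
      using Tdeg[of n] by (intro sum.mono_neutral_left) (auto simp: coeff_eq_0)
    finally show ?thesis .
  qed
  have polyT2: "poly (T n) x = (\<Sum>s\<le>d. poly (Q n) x ^ s / fact s)" for n x
    by (simp add: T_def poly_sum)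
  have ev1: "eventually (\<lambda>n. \<delta> n \<le> 1) sequentially"
    using order_tendstoD(2)[OF dlim, of 1] by (auto elim: eventually_mono)
  have d_o1: "\<delta> \<in> o(\<lambda>_. 1)"
    by (rule smalloI_tendsto) (use dlim in auto)
  have dpow_O1: "(\<lambda>n. \<delta> n ^ d) \<in> O(\<lambda>_. 1)"
    by (rule bigoI_tendsto[where c = "0 ^ d"]) (use dlim in \<open>auto intro!: tendsto_eq_intros\<close>)
  have dSuc: "(\<lambda>n. \<delta> n ^ Suc d) \<in> o(\<lambda>n. \<delta> n ^ d)"
  proof (rule smalloI_tendsto)
    show "(\<lambda>n. \<delta> n ^ Suc d / \<delta> n ^ d) \<longlonglongrightarrow> 0"
    proof -
      have "\<delta> n \<noteq> 0" for n using dpos by (metis less_irrefl)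
      then have "(\<lambda>n. \<delta> n ^ Suc d / \<delta> n ^ d) = \<delta>" by (simp add: fun_eq_iff)
      then show ?thesis using dlim by simp
    qed
    show "\<forall>\<^sub>F n in sequentially. \<delta> n ^ d \<noteq> 0"
      by (intro always_eventually allI) (use dpos in \<open>auto simp: less_imp_neq[symmetric]\<close>)
  qed
  have R: "(\<lambda>n. \<rho> n j - poly (T n) (\<delta> n * real j)) \<in> o(\<lambda>n. \<delta> n ^ d)" if j: "j \<le> d" for j
  proof -
    define x where "x n = poly (Q n) (\<delta> n * real j)" for n
    have xO': "x \<in> O(\<delta>)" unfolding x_def using xO[OF j] .
    have "x \<in> o(\<lambda>_. 1)" by (rule landau_o.big_small_trans[OF xO' d_o1])
    from smalloD_tendsto[OF this] have xlim: "x \<longlonglongrightarrow> 0" by simp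
    have "(\<lambda>n. \<epsilon> n j) \<in> o(\<lambda>_. 1)" by (rule landau_o.small_big_trans[OF epsO[OF j] dpow_O1])
    from smalloD_tendsto[OF this] have elim: "(\<lambda>n. \<epsilon> n j) \<longlonglongrightarrow> 0" by simp
    have evx: "eventually (\<lambda>n. \<bar>x n\<bar> \<le> 1) sequentially"
      using order_tendstoD(2)[OF tendsto_rabs_zero[OF xlim], of 1] by (auto elim: eventually_mono)
    have eve: "eventually (\<lambda>n. \<bar>\<epsilon> n j\<bar> \<le> 1) sequentially"
      using order_tendstoD(2)[OF tendsto_rabs_zero[OF elim], of 1] by (auto elim: eventually_mono)
    have A1: "(\<lambda>n. exp (x n + \<epsilon> n j) - exp (x n)) \<in> o(\<lambda>n. \<delta> n ^ d)"
    proof -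
      have "(\<lambda>n. exp (x n + \<epsilon> n j) - exp (x n)) \<in> O(\<lambda>n. \<epsilon> n j)"
      proof (rule bigoI[where c = 9])
        show "\<forall>\<^sub>F n in sequentially. norm (exp (x n + \<epsilon> n j) - exp (x n)) \<le> 9 * norm (\<epsilon> n j)"
          using evx eve
        proof eventually_elim
          case (elim n)
          have "exp (x n) \<le> exp 1" using elim by simp
          also have "\<dots> \<le> 3" using exp_le by simp
          finally have e3: "exp (x n) \<le> 3" .
          have "\<bar>exp (x n + \<epsilon> n j) - exp (x n)\<bar> = exp (x n) * \<bar>exp (\<epsilon> n j) - 1\<bar>"
          proof -
            have "exp (x n + \<epsilon> n j) - exp (x n) = exp (x n) * (exp (\<epsilon> n j) - 1)"
              by (simp add: exp_add algebra_simps)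
            then show ?thesis by (simp add: abs_mult)
          qed
          also have "\<dots> \<le> 3 * (3 * \<bar>\<epsilon> n j\<bar>)"
            using e3 exp_sub1_bound[OF elim(2)] by (intro mult_mono) auto
          finally show ?case by simp
        qed
      qed
      then show ?thesis by (rule landau_o.big_small_trans) (rule epsO[OF j])
    qed
    have A2: "(\<lambda>n. exp (x n) - poly (T n) (\<delta> n * real j)) \<in> o(\<lambda>n. \<delta> n ^ d)"
    proof -
      have "(\<lambda>n. exp (x n) - poly (T n) (\<delta> n * real j)) \<in> O(\<lambda>n. x n ^ Suc d)"
      proof (rule bigoI[where c = 3])
        show "\<forall>\<^sub>F n in sequentially. norm (exp (x n) - poly (T n) (\<delta> n * real j)) \<le> 3 * norm (x n ^ Suc d)"
          using evx
        proof eventually_elim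
          case (elim n)
          show ?case using exp_taylor_bound[OF elim, of d]
            by (simp add: polyT2 x_def power_abs abs_mult)
        qed
      qed
      also have "(\<lambda>n. x n ^ Suc d) \<in> O(\<lambda>n. \<delta> n ^ Suc d)" by (rule landau_o.big_power[OF xO'])
      finally show ?thesis using dSuc by (rule landau_o.big_small_trans)
    qed
    have "(\<lambda>n. (exp (x n + \<epsilon> n j) - exp (x n)) + (exp (x n) - poly (T n) (\<delta> n * real j))) \<in> o(\<lambda>n. \<delta> n ^ d)"
      by (rule sum_in_smallo(1)[OF A1 A2])
    then show ?thesis using rho[OF j] by (simp add: x_def)
  qed
  define E where "E n = (\<Sum>j\<le>d. W j * (\<rho> n j - poly (T n) (\<delta> n * real j)))" for n
  have Eo: "E \<in> o(\<lambda>n. \<delta> n ^ d)"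
    unfolding E_def
  proof (rule big_sum_in_smallo)
    fix j assume "j \<in> {..d}"
    then have R': "(\<lambda>n. \<rho> n j - poly (T n) (\<delta> n * real j)) \<in> o(\<lambda>n. \<delta> n ^ d)" using R by simp
    show "(\<lambda>n. W j * (\<rho> n j - poly (T n) (\<delta> n * real j))) \<in> o(\<lambda>n. \<delta> n ^ d)"
      using R' by (cases "W j = 0") simp_all
  qed
  have kd: "d = k + i" using id by (simp add: k_def)
  have dk: "(\<lambda>n. \<delta> n ^ d) \<in> O(\<lambda>n. \<delta> n ^ k)"
  proof (rule bigoI[where c = 1])
    show "\<forall>\<^sub>F n in sequentially. norm (\<delta> n ^ d) \<le> 1 * norm (\<delta> n ^ k)"
      using ev1
    proof eventually_elim
      case (elim n)
      have p: "0 \<le> \<delta> n" using dpos by (simp add: less_imp_le)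
      have "\<delta> n ^ i \<le> 1" using p elim by (rule power_le_one)
      then have "\<delta> n ^ k * \<delta> n ^ i \<le> \<delta> n ^ k * 1" using p by (intro mult_left_mono) auto
      then show ?case using p by (simp add: kd power_add)
    qed
  qed
  have Elim: "(\<lambda>n. E n / \<delta> n ^ k) \<longlonglongrightarrow> 0"
    by (rule smalloD_tendsto, rule landau_o.small_big_trans[OF Eo dk])
  define G where "G n t = (if t < k then 0 else \<delta> n ^ (t - k) * M t)" for n t
  have Mz: "M t = 0" if "t < k" for t
    using Wm[of t] that by (simp add: M_def k_def)
  have Mk: "M k = L" using Wm[of k] by (simp add: M_def k_def)
  have kD: "k \<le> D" by (simp add: D_def k_def)
  have eq: "\<delta>' n ^ i / \<delta>' n ^ d * (\<Sum>j\<le>d. W j * \<rho> n j)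
      = (\<delta> n / \<delta>' n) ^ k * (\<Sum>t\<le>D. coeff (T n) t * G n t) + (\<delta> n / \<delta>' n) ^ k * (E n / \<delta> n ^ k)" for n
  proof -
    have p: "\<delta> n > 0" "\<delta>' n > 0" using dpos d'pos by auto
    have S: "(\<Sum>j\<le>d. W j * \<rho> n j) = (\<Sum>j\<le>d. W j * poly (T n) (\<delta> n * real j)) + E n"
      by (simp add: E_def sum.distrib[symmetric] algebra_simps)
    have "(\<Sum>j\<le>d. W j * poly (T n) (\<delta> n * real j)) = (\<Sum>j\<le>d. \<Sum>t\<le>D. W j * (coeff (T n) t * (\<delta> n ^ t * real j ^ t)))"
      by (simp add: polyT sum_distrib_left power_mult_distrib)
    also have "\<dots> = (\<Sum>t\<le>D. \<Sum>j\<le>d. W j * (coeff (T n) t * (\<delta> n ^ t * real j ^ t)))"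
      by (rule sum.swap)
    also have "\<dots> = (\<Sum>t\<le>D. coeff (T n) t * \<delta> n ^ t * M t)"
      by (intro sum.cong refl) (simp add: M_def sum_distrib_left mult_ac)
    also have "\<dots> = (\<Sum>t\<le>D. \<delta> n ^ k * (coeff (T n) t * G n t))"
    proof (intro sum.cong refl)
      fix t
      show "coeff (T n) t * \<delta> n ^ t * M t = \<delta> n ^ k * (coeff (T n) t * G n t)"
      proof (cases "t < k")
        case True then show ?thesis by (simp add: G_def Mz)
      next
        case False
        then have "\<delta> n ^ t = \<delta> n ^ k * \<delta> n ^ (t - k)" by (simp add: power_add[symmetric])
        then show ?thesis using False by (simp add: G_def)
      qed
    qed
    also have "\<dots> = \<delta> n ^ k * (\<Sum>t\<le>D. coeff (T n) t * G n t)" by (simp add: sum_distrib_left)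
    finally have S2: "(\<Sum>j\<le>d. W j * poly (T n) (\<delta> n * real j)) = \<delta> n ^ k * (\<Sum>t\<le>D. coeff (T n) t * G n t)" .
    have e1: "\<delta>' n ^ i / \<delta>' n ^ d = (\<delta> n / \<delta>' n) ^ k / \<delta> n ^ k"
      using p by (simp add: kd power_add power_divide field_simps)
    show ?thesis unfolding S S2 e1 using p by (simp add: field_simps)
  qed
  have Glim: "(\<lambda>n. G n t) \<longlonglongrightarrow> (if t = k then L else 0)" if "t \<le> D" for t
  proof (cases "t < k")
    case True then show ?thesis by (simp add: G_def)
  next
    case False
    have "(\<lambda>n. \<delta> n ^ (t - k) * M t) \<longlonglongrightarrow> 0 ^ (t - k) * M t"
      by (intro tendsto_intros dlim)
    moreover have "0 ^ (t - k) * M t = (if t = k then L else 0)"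
      using False by (auto simp: Mk)
    ultimately show ?thesis using False by (simp add: G_def)
  qed
  have "(\<lambda>n. (\<delta> n / \<delta>' n) ^ k * (\<Sum>t\<le>D. coeff (T n) t * G n t) + (\<delta> n / \<delta>' n) ^ k * (E n / \<delta> n ^ k))
      \<longlonglongrightarrow> 1 ^ k * (\<Sum>t\<le>D. coeff T0 t * (if t = k then L else 0)) + 1 ^ k * 0"
    by (intro tendsto_intros ratio Tconv Glim Elim) auto
  moreover have "(\<Sum>t\<le>D. coeff T0 t * (if t = k then L else 0)) = L * coeff T0 k"
  proof -
    have "(\<Sum>t\<le>D. coeff T0 t * (if t = k then L else 0)) = (\<Sum>t\<le>D. if t = k then coeff T0 k * L else 0)"
      by (intro sum.cong) auto
    also have "\<dots> = L * coeff T0 k" using kD by simp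
    finally show ?thesis .
  qed
  ultimately show ?thesis unfolding eq T0_def[symmetric] k_def[symmetric] by simp
qed



lemma pcompose_monom': "pcompose (monom c j) q = smult c (q ^ j)"
  by (induction j) (simp_all add: monom_0 monom_Suc pcompose_pCons)

lemma coeff_lin_pow:
  "coeff ([:a, b:] ^ j) i = real (j choose i) * b ^ i * (a::real) ^ (j - i)"
proof (cases "i \<le> j")
  case True then show ?thesis by (simp add: coeff_linear_poly_power)
next
  case False
  have "degree ([:a, b:] ^ j) \<le> degree [:a, b:] * j" by (rule degree_power_le)
  also have "\<dots> \<le> j" by simp
  finally have "degree ([:a, b:] ^ j) < i" using False by simp
  then show ?thesis using False by (simp add: coeff_eq_0)
qed

lemma coeffJ:
  "coeff (pcompose (jensen_J \<alpha> d n) [:a, b:]) i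
     = (\<Sum>j\<le>d. real (d choose j) * \<alpha> (n + j) * (real (j choose i) * b ^ i * a ^ (j - i)))"
  by (simp add: jensen_J_def pcompose_sum pcompose_monom' coeff_sum coeff_lin_pow)

lemma coeffK:
  "coeff (pcompose (jensen_K \<alpha> d n) [:a, b:]) i
     = (\<Sum>j\<le>d. real (d choose j) * \<alpha> (n + j) * (real ((d - j) choose i) * b ^ i * a ^ (d - j - i)))"
  by (simp add: jensen_K_def pcompose_sum pcompose_monom' coeff_sum coeff_lin_pow)

lemma coeffJ_scaled:
  assumes "\<alpha> n > 0" "\<delta> > 0"
  shows "coeff (smult (inverse (\<delta> ^ d) / \<alpha> n) (pcompose (jensen_J \<alpha> d n) [: -1 / exp A, \<delta> / exp A :])) i
     = \<delta> ^ i / \<delta> ^ d * (\<Sum>j\<le>d. (real (d choose j) * real (j choose i) * (-1) ^ (j - i)) * (\<alpha> (n + j) / \<alpha> n / exp A ^ j))"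
proof -
  have "coeff (smult (inverse (\<delta> ^ d) / \<alpha> n) (pcompose (jensen_J \<alpha> d n) [: -1 / exp A, \<delta> / exp A :])) i
     = (\<Sum>j\<le>d. inverse (\<delta> ^ d) / \<alpha> n * (real (d choose j) * \<alpha> (n + j) * (real (j choose i) * (\<delta> / exp A) ^ i * (-1 / exp A) ^ (j - i))))"
    by (simp add: coeffJ sum_distrib_left)
  also have "\<dots> = (\<Sum>j\<le>d. \<delta> ^ i / \<delta> ^ d * ((real (d choose j) * real (j choose i) * (-1) ^ (j - i)) * (\<alpha> (n + j) / \<alpha> n / exp A ^ j)))"
  proof (intro sum.cong refl)
    fix j
    show "inverse (\<delta> ^ d) / \<alpha> n * (real (d choose j) * \<alpha> (n + j) * (real (j choose i) * (\<delta> / exp A) ^ i * (-1 / exp A) ^ (j - i)))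
       = \<delta> ^ i / \<delta> ^ d * ((real (d choose j) * real (j choose i) * (-1) ^ (j - i)) * (\<alpha> (n + j) / \<alpha> n / exp A ^ j))"
    proof (cases "i \<le> j")
      case True
      have eq: "exp A ^ j = exp A ^ i * exp A ^ (j - i)" using True by (simp add: power_add[symmetric])
      have h: "real (j choose i) * (\<delta> / exp A) ^ i * (-1 / exp A) ^ (j - i)
          = real (j choose i) * (\<delta> ^ i * (-1) ^ (j - i) / exp A ^ j)"
        unfolding eq power_divide by simp
      show ?thesis unfolding h using assms by (simp add: field_simps)
    qed (simp add: not_le binomial_eq_0)
  qed
  finally show ?thesis by (simp add: sum_distrib_left)
qed

lemma coeffK_scaled:
  assumes "\<alpha> n > 0" "\<delta> > 0"
  shows "coeff (smult (inverse ((exp A * \<delta>) ^ d) / \<alpha> n) (pcompose (jensen_K \<alpha> d n) [: - exp A, exp A * \<delta> :])) i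
     = \<delta> ^ i / \<delta> ^ d * (\<Sum>j\<le>d. (real (d choose j) * real ((d - j) choose i) * (-1) ^ (d - j - i)) * (\<alpha> (n + j) / \<alpha> n / exp A ^ j))"
proof -
  have "coeff (smult (inverse ((exp A * \<delta>) ^ d) / \<alpha> n) (pcompose (jensen_K \<alpha> d n) [: - exp A, exp A * \<delta> :])) i
     = (\<Sum>j\<le>d. inverse ((exp A * \<delta>) ^ d) / \<alpha> n * (real (d choose j) * \<alpha> (n + j) * (real ((d - j) choose i) * (exp A * \<delta>) ^ i * (- exp A) ^ (d - j - i))))"
    by (simp add: coeffK sum_distrib_left)
  also have "\<dots> = (\<Sum>j\<le>d. \<delta> ^ i / \<delta> ^ d * ((real (d choose j) * real ((d - j) choose i) * (-1) ^ (d - j - i)) * (\<alpha> (n + j) / \<alpha> n / exp A ^ j)))"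
  proof (intro sum.cong refl)
    fix j assume "j \<in> {..d}"
    then have jd: "j \<le> d" by simp
    show "inverse ((exp A * \<delta>) ^ d) / \<alpha> n * (real (d choose j) * \<alpha> (n + j) * (real ((d - j) choose i) * (exp A * \<delta>) ^ i * (- exp A) ^ (d - j - i)))
       = \<delta> ^ i / \<delta> ^ d * ((real (d choose j) * real ((d - j) choose i) * (-1) ^ (d - j - i)) * (\<alpha> (n + j) / \<alpha> n / exp A ^ j))"
    proof (cases "i \<le> d - j")
      case True
      have eq: "exp A ^ d = exp A ^ i * exp A ^ (d - j - i) * exp A ^ j" using True jd by (simp add: power_add[symmetric])
      have h: "inverse ((exp A * \<delta>) ^ d) * ((exp A * \<delta>) ^ i * (- exp A) ^ (d - j - i))
          = inverse (\<delta> ^ d) * (\<delta> ^ i * (-1) ^ (d - j - i) / exp A ^ j)"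
        unfolding power_mult_distrib eq power_minus[of "exp A"] by (simp add: field_simps)
      have "inverse ((exp A * \<delta>) ^ d) / \<alpha> n * (real (d choose j) * \<alpha> (n + j) * (real ((d - j) choose i) * (exp A * \<delta>) ^ i * (- exp A) ^ (d - j - i)))
          = (inverse ((exp A * \<delta>) ^ d) * ((exp A * \<delta>) ^ i * (- exp A) ^ (d - j - i))) * (real (d choose j) * \<alpha> (n + j) * real ((d - j) choose i)) / \<alpha> n"
        by (simp only: mult_ac divide_inverse)
      also have "\<dots> = \<delta> ^ i / \<delta> ^ d * ((real (d choose j) * real ((d - j) choose i) * (-1) ^ (d - j - i)) * (\<alpha> (n + j) / \<alpha> n / exp A ^ j))"
        unfolding h using assms by (simp add: field_simps)
      finally show ?thesis .
    qed (simp add: not_le binomial_eq_0)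
  qed
  finally show ?thesis by (simp add: sum_distrib_left)
qed



lemma coeff_hermite:
  "coeff (hermite d) i = (if i \<le> d \<and> even (d - i) then
      complex_of_real (fact d * (-1)^((d-i) div 2) * 2^i / (fact ((d-i) div 2) * fact i)) else 0)"
proof -
  define c where "c k = complex_of_real (fact d * (-1) ^ k * 2 ^ (d - 2 * k) / (fact k * fact (d - 2 * k)))" for k
  have "coeff (hermite d) i = (\<Sum>k\<le>d div 2. if d - 2 * k = i then c k else 0)"
    unfolding hermite_def coeff_sum coeff_monom c_def by (rule refl)
  also have "\<dots> = (if i \<le> d \<and> even (d - i) then c ((d - i) div 2) else 0)"
  proof (cases "i \<le> d \<and> even (d - i)")
    case True
    have "(\<Sum>k\<le>d div 2. if d - 2 * k = i then c k else 0) = (\<Sum>k\<le>d div 2. if k = (d - i) div 2 then c k else 0)"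
      using True by (intro sum.cong refl) (auto elim!: evenE)
    also have "\<dots> = c ((d - i) div 2)" using True by auto
    finally show ?thesis unfolding if_P[OF True] .
  next
    case False
    have "(\<Sum>k\<le>d div 2. if d - 2 * k = i then c k else 0) = 0"
    proof (intro sum.neutral ballI)
      fix k assume "k \<in> {..d div 2}"
      then have "2 * k \<le> d" by auto
      then show "(if d - 2 * k = i then c k else 0) = 0" using False by auto
    qed
    then show ?thesis unfolding if_not_P[OF False] .
  qed
  also have "\<dots> = (if i \<le> d \<and> even (d - i) then
      complex_of_real (fact d * (-1)^((d-i) div 2) * 2^i / (fact ((d-i) div 2) * fact i)) else 0)"
  proof (cases "i \<le> d \<and> even (d - i)")
    case True
    then have "d - 2 * ((d - i) div 2) = i" by (auto elim!: evenE)
    then show ?thesis unfolding if_P[OF True] by (simp add: c_def)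
  next
    case False
    then show ?thesis by (simp only: if_not_P[OF False] if_False)
  qed
  finally show ?thesis .
qed

lemma coeff_pcomp_lin: "coeff (pcompose p [:0, c:]) i = c ^ i * coeff (p :: complex poly) i"
proof -
  have "[:0, c:] = monom c (Suc 0)" by (simp add: monom_Suc monom_0)
  then show ?thesis by simp
qed

lemma target_coeff:
  assumes "\<kappa> \<in> {1, -1}"
  shows "coeff (hermite_target \<kappa> d) i = (if i \<le> d \<and> even (d - i) then
      complex_of_real (fact d * \<kappa> ^ ((d-i) div 2) / (fact ((d-i) div 2) * fact i)) else 0)"
proof (cases "i \<le> d \<and> even (d - i)")
  case False
  have h0: "coeff (hermite d) i = 0" by (subst coeff_hermite) (simp only: if_not_P[OF False])
  show ?thesis unfolding if_not_P[OF False] by (simp add: hermite_target_def coeff_pcomp_lin h0)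
next
  case True
  define k where "k = (d - i) div 2"
  have dk: "d = i + 2 * k" using True by (auto simp: k_def elim!: evenE)
  have hc: "coeff (hermite d) i = complex_of_real (fact d * (-1)^k * 2^i / (fact k * fact i))"
    by (subst coeff_hermite) (simp only: if_P[OF True] k_def)
  note T = True
  show ?thesis
  proof (cases "\<kappa> = -1")
    case True
    have "coeff (hermite_target \<kappa> d) i = (1/2) ^ i * complex_of_real (fact d * (-1)^k * 2^i / (fact k * fact i))"
      using True by (simp add: hermite_target_def coeff_pcomp_lin hc)
    also have "\<dots> = complex_of_real ((1/2) ^ i * (fact d * (-1)^k * 2^i / (fact k * fact i)))"
      by simp
    also have "(1/2) ^ i * (fact d * (-1)^k * 2^i / (fact k * fact i)) = fact d * (-1)^k / (fact k * fact i :: real)"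
      by (simp add: power_one_over field_simps)
    finally show ?thesis unfolding if_P[OF T] using True by (simp add: k_def)
  next
    case False
    then have k1: "\<kappa> = 1" using assms by auto
    have ii: "inverse (\<i> ^ d) * \<i> ^ i = complex_of_real ((-1) ^ k)"
    proof -
      have "\<i> ^ d = \<i> ^ i * (-1) ^ k" unfolding dk power_add power_mult by simp
      moreover have "\<i> ^ i \<noteq> 0" by simp
      ultimately show ?thesis by (simp add: field_simps)
    qed
    have "coeff (hermite_target \<kappa> d) i = inverse (\<i> ^ d) * ((\<i> / 2) ^ i * complex_of_real (fact d * (-1)^k * 2^i / (fact k * fact i)))"
      using k1 by (simp add: hermite_target_def coeff_pcomp_lin hc)
    also have "\<dots> = (inverse (\<i> ^ d) * \<i> ^ i) * complex_of_real (fact d * (-1)^k * 2^i / (fact k * fact i) / 2 ^ i)"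
      by (simp add: power_divide field_simps)
    also have "\<dots> = complex_of_real ((-1) ^ k * (fact d * (-1)^k * 2^i / (fact k * fact i) / 2 ^ i))"
      unfolding ii by simp
    also have "(-1) ^ k * (fact d * (-1)^k * 2^i / (fact k * fact i) / 2 ^ i) = fact d / (fact k * fact i :: real)"
      by (simp add: field_simps flip: power_mult_distrib)
    finally show ?thesis unfolding if_P[OF T] using k1 by (simp add: k_def)
  qed
qed

lemma coeffT0:
  assumes "t \<le> d"
  shows "coeff (\<Sum>s\<le>d. smult (1 / fact s) (monom (\<kappa>::real) 2 ^ s)) t = (if even t then \<kappa> ^ (t div 2) / fact (t div 2) else 0)"
proof -
  have "coeff (\<Sum>s\<le>d. smult (1 / fact s) (monom \<kappa> 2 ^ s)) t = (\<Sum>s\<le>d. if s = t div 2 \<and> even t then \<kappa> ^ s / fact s else 0)"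
    by (auto simp: coeff_sum monom_power intro!: sum.cong)
  also have "\<dots> = (if even t then \<kappa> ^ (t div 2) / fact (t div 2) else 0)"
    using assms by (auto simp: sum.If_cases)
  finally show ?thesis .
qed



lemma bigo_cmult_right:
  fixes f g :: "nat \<Rightarrow> real"
  assumes "f \<in> O(g)" shows "(\<lambda>n. f n * c) \<in> O(g)"
  using assms by (cases "c = 0") simp_all

theorem theorem2p1:
  fixes \<alpha> A A' \<delta> \<delta>' :: "nat \<Rightarrow> real" and m :: nat and \<kappa> :: real
  assumes "log_polynomial \<alpha> m A \<kappa> \<delta>"
    and "\<forall>n. \<delta>' n > 0"
    and "(\<lambda>n. A' n - A n) \<in> o[sequentially](\<delta>)"
    and "(\<lambda>n. \<delta>' n - \<delta> n) \<in> o[sequentially](\<delta>)"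
  shows "\<forall>d. 1 \<le> d \<and> d \<le> m + 1 \<longrightarrow> hermite_jensen \<alpha> d A' \<kappa> \<delta>'"
proof (intro allI impI)
  fix d assume dd: "1 \<le> d \<and> d \<le> m + 1"
  from assms(1) obtain g :: "nat \<Rightarrow> nat \<Rightarrow> real" where
    m2: "m \<ge> 2" and kap: "\<kappa> \<in> {1, -1}" and apos: "\<forall>n. \<alpha> n > 0" and
    expn: "\<forall>j\<in>{1..m+1}.
           (\<lambda>n. ln (\<alpha> (n + j) / \<alpha> n) - (A n * real j + \<kappa> * \<delta> n ^ 2 * real j ^ 2
                 + (\<Sum>k=3..m. g k n * real j ^ k)))
           \<in> o[sequentially](\<lambda>n. \<delta> n ^ (m + 1))" and
    dpos: "\<forall>n. \<delta> n > 0" and dlim: "\<delta> \<longlonglongrightarrow> 0" and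
    go: "\<forall>k\<in>{3..m}. g k \<in> o[sequentially](\<lambda>n. \<delta> n ^ k)"
    unfolding log_polynomial_def by blast
  have dne: "\<delta> n \<noteq> 0" for n using dpos by (metis less_irrefl)
  have ev1: "eventually (\<lambda>n. \<delta> n \<le> 1) sequentially"
    using order_tendstoD(2)[OF dlim, of 1] by (auto elim: eventually_mono)
  define Q where "Q n = monom ((A n - A' n) / \<delta> n) 1 + monom \<kappa> 2 + (\<Sum>k\<in>{3..m}. monom (g k n / \<delta> n ^ k) k)" for n
  define Q0 where "Q0 = monom \<kappa> 2"
  define \<epsilon> where "\<epsilon> n j = ln (\<alpha> (n + j) / \<alpha> n) - (A n * real j + \<kappa> * \<delta> n ^ 2 * real j ^ 2
                 + (\<Sum>k=3..m. g k n * real j ^ k))" for n j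
  define \<rho> where "\<rho> n j = \<alpha> (n + j) / \<alpha> n / exp (A' n) ^ j" for n j
  have ratio: "(\<lambda>n. \<delta> n / \<delta>' n) \<longlonglongrightarrow> 1"
  proof -
    have "(\<lambda>n. (\<delta>' n - \<delta> n) / \<delta> n) \<longlonglongrightarrow> 0" by (rule smalloD_tendsto[OF assms(4)])
    then have "(\<lambda>n. 1 + (\<delta>' n - \<delta> n) / \<delta> n) \<longlonglongrightarrow> 1 + 0" by (intro tendsto_intros)
    then have "(\<lambda>n. inverse (1 + (\<delta>' n - \<delta> n) / \<delta> n)) \<longlonglongrightarrow> inverse (1 + 0)" by (rule tendsto_inverse) simp
    moreover have "inverse (1 + (\<delta>' n - \<delta> n) / \<delta> n) = \<delta> n / \<delta>' n" for n
      using dne[of n] by (simp add: field_simps)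
    ultimately show ?thesis by simp
  qed
  have c1: "(\<lambda>n. (A n - A' n) / \<delta> n) \<longlonglongrightarrow> 0"
  proof -
    have "(\<lambda>n. (A' n - A n) / \<delta> n) \<longlonglongrightarrow> 0" by (rule smalloD_tendsto[OF assms(3)])
    then have "(\<lambda>n. - ((A' n - A n) / \<delta> n)) \<longlonglongrightarrow> - 0" by (intro tendsto_intros)
    moreover have "- ((A' n - A n) / \<delta> n) = (A n - A' n) / \<delta> n" for n
      by (simp add: minus_divide_left)
    ultimately show ?thesis by simp
  qed
  have cQ: "coeff (Q n) t = (if t = 1 then (A n - A' n) / \<delta> n else 0) + (if t = 2 then \<kappa> else 0)
      + (if t \<in> {3..m} then g t n / \<delta> n ^ t else 0)" for n t
    unfolding Q_def coeff_add coeff_sum coeff_monom by (simp add: eq_commute[of _ t])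
  have Qconv: "(\<lambda>n. coeff (Q n) t) \<longlonglongrightarrow> coeff Q0 t" for t
  proof -
    have a: "(\<lambda>n. if t = 1 then (A n - A' n) / \<delta> n else 0) \<longlonglongrightarrow> 0" using c1 by (cases "t = 1") simp_all
    have b: "(\<lambda>n. if t \<in> {3..m} then g t n / \<delta> n ^ t else 0) \<longlonglongrightarrow> 0"
    proof (cases "t \<in> {3..m}")
      case True
      show ?thesis unfolding if_P[OF True] using smalloD_tendsto[OF go[rule_format, OF True]] by simp
    next
      case False
      show ?thesis unfolding if_not_P[OF False] by (rule tendsto_const)
    qed
    have "(\<lambda>n. coeff (Q n) t) \<longlonglongrightarrow> 0 + (if t = 2 then \<kappa> else 0) + 0"
      unfolding cQ by (intro tendsto_add a b tendsto_const)
    then show ?thesis by (simp add: Q0_def)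
  qed
  have Qdeg: "degree (Q n) \<le> m" for n
    unfolding Q_def using m2
    by (intro degree_add_le degree_sum_le order.trans[OF degree_monom_le]) auto
  have polyQ: "poly (Q n) (\<delta> n * real j) = (A n - A' n) * real j + \<kappa> * \<delta> n ^ 2 * real j ^ 2
      + (\<Sum>k=3..m. g k n * real j ^ k)" for n j
  proof -
    have "(\<Sum>k=3..m. g k n / \<delta> n ^ k * (\<delta> n * real j) ^ k) = (\<Sum>k=3..m. g k n * real j ^ k)"
      using dne[of n] by (intro sum.cong refl) (simp add: power_mult_distrib)
    then show ?thesis using dne[of n]
      by (simp add: Q_def poly_sum poly_monom power_mult_distrib)
  qed
  have powO: "(\<lambda>n. \<delta> n ^ k) \<in> O(\<delta>)" if "k \<ge> 1" for k
  proof (rule bigoI[where c = 1])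
    show "\<forall>\<^sub>F n in sequentially. norm (\<delta> n ^ k) \<le> 1 * norm (\<delta> n)"
      using ev1
    proof eventually_elim
      case (elim n)
      have p: "0 \<le> \<delta> n" using dpos by (simp add: less_imp_le)
      have "\<delta> n ^ (k - 1) \<le> 1" using p elim by (rule power_le_one)
      then have "\<delta> n * \<delta> n ^ (k - 1) \<le> \<delta> n * 1" using p by (intro mult_left_mono) auto
      moreover have "\<delta> n ^ k = \<delta> n * \<delta> n ^ (k - 1)" using that by (cases k) auto
      ultimately show ?case using p by simp
    qed
  qed
  have xO: "(\<lambda>n. poly (Q n) (\<delta> n * real j)) \<in> O(\<delta>)" for j
  proof -
    have t1: "(\<lambda>n. (A n - A' n) * real j) \<in> O(\<delta>)"
    proof -
      have "(\<lambda>n. A n - A' n) \<in> o(\<delta>)" using assms(3) landau_o.small.uminus_in_iff[of "\<lambda>n. A' n - A n"] by simp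
      then show ?thesis by (intro bigo_cmult_right landau_o.small_imp_big)
    qed
    have t2: "(\<lambda>n. \<kappa> * \<delta> n ^ 2 * real j ^ 2) \<in> O(\<delta>)"
    proof -
      have "(\<lambda>n. \<delta> n ^ 2 * (\<kappa> * real j ^ 2)) \<in> O(\<delta>)" by (intro bigo_cmult_right powO) simp
      then show ?thesis by (simp add: mult_ac)
    qed
    have t3: "(\<lambda>n. \<Sum>k=3..m. g k n * real j ^ k) \<in> O(\<delta>)"
    proof (rule big_sum_in_bigo)
      fix k assume k: "k \<in> {3..m}"
      have "g k \<in> O(\<lambda>n. \<delta> n ^ k)" using go k by (intro landau_o.small_imp_big) auto
      also have "(\<lambda>n. \<delta> n ^ k) \<in> O(\<delta>)" using k by (intro powO) auto
      finally show "(\<lambda>n. g k n * real j ^ k) \<in> O(\<delta>)" by (rule bigo_cmult_right)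
    qed
    show ?thesis unfolding polyQ by (intro sum_in_bigo(1) t1 t2 t3)
  qed
  have epsO: "(\<lambda>n. \<epsilon> n j) \<in> o(\<lambda>n. \<delta> n ^ d)" if j: "j \<le> d" for j
  proof (cases "j = 0")
    case True
    then have "\<epsilon> n j = 0" for n using apos by (simp add: \<epsilon>_def less_imp_neq[symmetric])
    then show ?thesis by simp
  next
    case False
    then have jin: "j \<in> {1..m+1}" using j dd by auto
    have "(\<lambda>n. \<epsilon> n j) \<in> o(\<lambda>n. \<delta> n ^ (m + 1))" using expn jin by (simp add: \<epsilon>_def)
    also have "(\<lambda>n. \<delta> n ^ (m + 1)) \<in> O(\<lambda>n. \<delta> n ^ d)"
    proof (rule bigoI[where c = 1])
      show "\<forall>\<^sub>F n in sequentially. norm (\<delta> n ^ (m + 1)) \<le> 1 * norm (\<delta> n ^ d)"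
        using ev1
      proof eventually_elim
        case (elim n)
        have p: "0 \<le> \<delta> n" using dpos by (simp add: less_imp_le)
        have "\<delta> n ^ (m + 1 - d) \<le> 1" using p elim by (rule power_le_one)
        then have "\<delta> n ^ d * \<delta> n ^ (m + 1 - d) \<le> \<delta> n ^ d * 1" using p by (intro mult_left_mono) auto
        moreover have "\<delta> n ^ (m + 1) = \<delta> n ^ d * \<delta> n ^ (m + 1 - d)" using dd by (simp add: power_add[symmetric])
        ultimately show ?case using p by simp
      qed
    qed
    finally show ?thesis .
  qed
  have rho: "\<rho> n j = exp (poly (Q n) (\<delta> n * real j) + \<epsilon> n j)" for n j
  proof -
    have r: "\<alpha> (n + j) / \<alpha> n > 0" using apos by simp
    have "poly (Q n) (\<delta> n * real j) + \<epsilon> n j = ln (\<alpha> (n + j) / \<alpha> n) - real j * A' n"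
      unfolding polyQ \<epsilon>_def by (simp add: algebra_simps)
    then show ?thesis using r by (simp add: \<rho>_def exp_diff exp_of_nat_mult)
  qed
  define T0 where "T0 = (\<Sum>s\<le>d. smult (1 / fact s) (Q0 ^ s))"
  define tgt where "tgt i = (if i \<le> d \<and> even (d - i) then fact d * \<kappa> ^ ((d - i) div 2) / (fact ((d - i) div 2) * fact i) else 0)" for i
  have MLim: "(\<lambda>n. \<delta>' n ^ i / \<delta>' n ^ d * (\<Sum>j\<le>d. W j * \<rho> n j)) \<longlonglongrightarrow> L * coeff T0 (d - i)"
    if "i \<le> d" and "\<And>u. u \<le> d - i \<Longrightarrow> (\<Sum>j\<le>d. W j * real j ^ u) = (if u = d - i then L else 0)" for i W L
    unfolding T0_def
    by (rule main_limit[where \<epsilon> = \<epsilon>, OF dpos assms(2) dlim ratio Qconv Qdeg xO epsO rho that])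
  have T0c: "coeff T0 (d - i) = (if even (d - i) then \<kappa> ^ ((d - i) div 2) / fact ((d - i) div 2) else 0)" for i
    unfolding T0_def Q0_def by (rule coeffT0) simp
  have tgtc: "coeff (hermite_target \<kappa> d) i = complex_of_real (tgt i)" for i
    unfolding tgt_def by (subst target_coeff[OF kap]) (simp only: if_distrib[of complex_of_real] of_real_0)
  have limJ: "(\<lambda>n. coeff (smult (inverse (\<delta>' n ^ d) / \<alpha> n)
          (pcompose (jensen_J \<alpha> d n) [: -1 / exp (A' n), \<delta>' n / exp (A' n) :])) i) \<longlonglongrightarrow> tgt i" for i
  proof (cases "i \<le> d")
    case True
    have "(\<lambda>n. \<delta>' n ^ i / \<delta>' n ^ d * (\<Sum>j\<le>d. (real (d choose j) * real (j choose i) * (-1) ^ (j - i)) * \<rho> n j))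
        \<longlonglongrightarrow> ((-1) ^ (d - i) * fact d / fact i) * coeff T0 (d - i)"
      by (rule MLim[OF True]) (rule MJ[OF True])
    moreover have "((-1) ^ (d - i) * fact d / fact i) * coeff T0 (d - i) = tgt i"
    proof (cases "even (d - i)")
      case True
      then show ?thesis unfolding T0c tgt_def if_P[OF True] if_P[OF conjI[OF \<open>i \<le> d\<close> True]]
        by simp
    next
      case False
      then show ?thesis unfolding T0c tgt_def if_not_P[OF False] by simp
    qed
    moreover have "(\<lambda>n. coeff (smult (inverse (\<delta>' n ^ d) / \<alpha> n)
          (pcompose (jensen_J \<alpha> d n) [: -1 / exp (A' n), \<delta>' n / exp (A' n) :])) i) = (\<lambda>n. \<delta>' n ^ i / \<delta>' n ^ d * (\<Sum>j\<le>d. (real (d choose j) * real (j choose i) * (-1) ^ (j - i)) * \<rho> n j))"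
    proof (rule ext)
      fix n
      show "coeff (smult (inverse (\<delta>' n ^ d) / \<alpha> n)
          (pcompose (jensen_J \<alpha> d n) [: -1 / exp (A' n), \<delta>' n / exp (A' n) :])) i = \<delta>' n ^ i / \<delta>' n ^ d * (\<Sum>j\<le>d. (real (d choose j) * real (j choose i) * (-1) ^ (j - i)) * \<rho> n j)"
        unfolding \<rho>_def by (rule coeffJ_scaled) (use apos assms(2) in auto)
    qed
    ultimately show ?thesis by simp
  next
    case False
    have z: "coeff (smult (inverse (\<delta>' n ^ d) / \<alpha> n)
          (pcompose (jensen_J \<alpha> d n) [: -1 / exp (A' n), \<delta>' n / exp (A' n) :])) i = 0" for n
      using apos assms(2) False by (subst coeffJ_scaled) (auto intro!: sum.neutral simp: binomial_eq_0)
    have z2: "tgt i = 0" using False by (simp add: tgt_def)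
    show ?thesis unfolding z z2 by (rule tendsto_const)
  qed
  have limK: "(\<lambda>n. coeff (smult (inverse ((exp (A' n) * \<delta>' n) ^ d) / \<alpha> n)
          (pcompose (jensen_K \<alpha> d n) [: - exp (A' n), exp (A' n) * \<delta>' n :])) i) \<longlonglongrightarrow> tgt i" for i
  proof (cases "i \<le> d")
    case True
    have "(\<lambda>n. \<delta>' n ^ i / \<delta>' n ^ d * (\<Sum>j\<le>d. (real (d choose j) * real ((d - j) choose i) * (-1) ^ (d - j - i)) * \<rho> n j))
        \<longlonglongrightarrow> (fact d / fact i) * coeff T0 (d - i)"
      by (rule MLim[OF True]) (rule MK[OF True])
    moreover have "(fact d / fact i) * coeff T0 (d - i) = tgt i"
    proof (cases "even (d - i)")
      case True
      then show ?thesis unfolding T0c tgt_def if_P[OF True] if_P[OF conjI[OF \<open>i \<le> d\<close> True]]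
        by simp
    next
      case False
      then show ?thesis unfolding T0c tgt_def if_not_P[OF False] by simp
    qed
    moreover have "(\<lambda>n. coeff (smult (inverse ((exp (A' n) * \<delta>' n) ^ d) / \<alpha> n)
          (pcompose (jensen_K \<alpha> d n) [: - exp (A' n), exp (A' n) * \<delta>' n :])) i) = (\<lambda>n. \<delta>' n ^ i / \<delta>' n ^ d * (\<Sum>j\<le>d. (real (d choose j) * real ((d - j) choose i) * (-1) ^ (d - j - i)) * \<rho> n j))"
    proof (rule ext)
      fix n
      show "coeff (smult (inverse ((exp (A' n) * \<delta>' n) ^ d) / \<alpha> n)
          (pcompose (jensen_K \<alpha> d n) [: - exp (A' n), exp (A' n) * \<delta>' n :])) i = \<delta>' n ^ i / \<delta>' n ^ d * (\<Sum>j\<le>d. (real (d choose j) * real ((d - j) choose i) * (-1) ^ (d - j - i)) * \<rho> n j)"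
        unfolding \<rho>_def by (rule coeffK_scaled) (use apos assms(2) in auto)
    qed
    ultimately show ?thesis by simp
  next
    case False
    have z: "coeff (smult (inverse ((exp (A' n) * \<delta>' n) ^ d) / \<alpha> n)
          (pcompose (jensen_K \<alpha> d n) [: - exp (A' n), exp (A' n) * \<delta>' n :])) i = 0" for n
      using apos assms(2) False by (subst coeffK_scaled) (auto intro!: sum.neutral simp: binomial_eq_0)
    have z2: "tgt i = 0" using False by (simp add: tgt_def)
    show ?thesis unfolding z z2 by (rule tendsto_const)
  qed
  have PJ: "poly_conv (\<lambda>n. map_poly complex_of_real (smult (inverse (\<delta>' n ^ d) / \<alpha> n)
          (pcompose (jensen_J \<alpha> d n) [: -1 / exp (A' n), \<delta>' n / exp (A' n) :]))) (hermite_target \<kappa> d)"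
    unfolding poly_conv_def tgtc coeff_map_poly[of complex_of_real, OF of_real_0]
    by (intro allI tendsto_of_real limJ)
  have PK: "poly_conv (\<lambda>n. map_poly complex_of_real (smult (inverse ((exp (A' n) * \<delta>' n) ^ d) / \<alpha> n)
          (pcompose (jensen_K \<alpha> d n) [: - exp (A' n), exp (A' n) * \<delta>' n :]))) (hermite_target \<kappa> d)"
    unfolding poly_conv_def tgtc coeff_map_poly[of complex_of_real, OF of_real_0]
    by (intro allI tendsto_of_real limK)
  show "hermite_jensen \<alpha> d A' \<kappa> \<delta>'"
    unfolding hermite_jensen_def using dd kap apos PJ PK by blast
qed


end
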